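(* The category $\mathsf{HSLat}$ of Heyting semilattices does not satisfy condition (W): there exist a Heyting semilattice $A$ and subobjects $X,Y,Z\le A$ with $[X,Y]=0$ but $[X,Y,Z]\neq 0$. Equivalently, there exist subobjects $X,Y\le A$ with $[X,Y]=0$ but $[X^A,Y^A]\neq 0$.
   Context: A Heyting semilattice is a meet-semilattice with top $1$ and an operation $\Rightarrow$ with $x\wedge y\le z$ iff $x\le y\Rightarrow z$; $\mathsf{HSLat}$ is the category of these with morphisms preserving $1,\wedge,\Rightarrow$; it is a semi-abelian category (pointed, Barr-exact, protomodular, with binary coproducts) with zero object $\{1\}$. For objects $X_1,\dots,X_n$ ($n\ge2$) the cosmash product $X_1\diamond\cdots\diamond X_n$ is the kernel of the morphism $X_1+\cdots+X_n\to\prod_{k=1}^n\coprod_{j\ne k}X_j$ whose component to $\coprod_{j\ne k}X_j$ sends $X_l$ by the coproduct injection if $l\neq k$ and is $0$ on $X_k$. For subobjects $x_i\colon X_i\rightarrowtail A$, the Higgins commutator $[X_1,\dots,X_n]$ is the regular (epi-mono) image of $X_1\diamond\cdots\diamond X_n$ under $\langle x_1,\dots,x_n\rangle\colon X_1+\cdots+X_n\to A$. $X^A$ denotes the normal closure of $X$ in $A$ (smallest normal subobject, i.e. kernel, of $A$ containing $X$). Condition (W) for a semi-abelian category: for all subobjects $X,Y,Z\le A$, $[X,Y]=0$ implies $[X,Y,Z]=0$. *)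

theory Defs
  imports Main
begin

record 'a hslat =
  carrier :: "'a set"
  one :: 'a
  meet :: "'a \<Rightarrow> 'a \<Rightarrow> 'a"
  imp :: "'a \<Rightarrow> 'a \<Rightarrow> 'a"

definition leq :: "'a hslat \<Rightarrow> 'a \<Rightarrow> 'a \<Rightarrow> bool" where
  "leq A x y \<longleftrightarrow> meet A x y = x"

definition is_hsl :: "'a hslat \<Rightarrow> bool" where
  "is_hsl A \<longleftrightarrow>
     one A \<in> carrier A \<and>
     (\<forall>x\<in>carrier A. \<forall>y\<in>carrier A. meet A x y \<in> carrier A \<and> imp A x y \<in> carrier A) \<and>
     (\<forall>x\<in>carrier A. meet A x x = x) \<and>
     (\<forall>x\<in>carrier A. \<forall>y\<in>carrier A. meet A x y = meet A y x) \<and>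
     (\<forall>x\<in>carrier A. \<forall>y\<in>carrier A. \<forall>z\<in>carrier A.
        meet A (meet A x y) z = meet A x (meet A y z)) \<and>
     (\<forall>x\<in>carrier A. meet A x (one A) = x) \<and>
     (\<forall>x\<in>carrier A. \<forall>y\<in>carrier A. \<forall>z\<in>carrier A.
        leq A (meet A x y) z \<longleftrightarrow> leq A x (imp A y z))"

text \<open>Subobjects of A are (up to isomorphism) the subalgebras of A.\<close>
definition subalg :: "'a hslat \<Rightarrow> 'a set \<Rightarrow> bool" where
  "subalg A X \<longleftrightarrow> X \<subseteq> carrier A \<and> one A \<in> X \<and>
     (\<forall>x\<in>X. \<forall>y\<in>X. meet A x y \<in> X \<and> imp A x y \<in> X)"

definition hom_on :: "('a \<Rightarrow> 'b) \<Rightarrow> 'a set \<Rightarrow> 'a hslat \<Rightarrow> 'b hslat \<Rightarrow> bool" where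
  "hom_on h X A B \<longleftrightarrow> (\<forall>x\<in>X. h x \<in> carrier B) \<and> h (one A) = one B \<and>
     (\<forall>x\<in>X. \<forall>y\<in>X. h (meet A x y) = meet B (h x) (h y) \<and> h (imp A x y) = imp B (h x) (h y))"

section \<open>Terms (elements of coproducts are represented by terms in generators)\<close>

datatype 'g tm = Gen 'g | One | Meet "'g tm" "'g tm" | Imp "'g tm" "'g tm"

fun gens :: "'g tm \<Rightarrow> 'g set" where
  "gens (Gen g) = {g}"
| "gens One = {}"
| "gens (Meet s t) = gens s \<union> gens t"
| "gens (Imp s t) = gens s \<union> gens t"

fun eval :: "'b hslat \<Rightarrow> ('g \<Rightarrow> 'b) \<Rightarrow> 'g tm \<Rightarrow> 'b" where
  "eval B v (Gen g) = v g"
| "eval B v One = one B"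
| "eval B v (Meet s t) = meet B (eval B v s) (eval B v t)"
| "eval B v (Imp s t) = imp B (eval B v s) (eval B v t)"

text \<open>Generators of the coproduct X_0 + ... + X_(n-1) of subalgebras Xs of A:
  pairs (j, a) with j < n and a in X_j.\<close>
definition copr_gens :: "'a set list \<Rightarrow> (nat \<times> 'a) set" where
  "copr_gens Xs = {(j, a). j < length Xs \<and> a \<in> Xs ! j}"

text \<open>A term t over the generators represents an element of the cosmash product
  iff, for every k, its image in the coproduct of the X_j (j /= k) under the map that
  is 0 on X_k is the zero element 1.  An equation holds in that coproduct iff it holds
  under all homomorphic interpretations of the X_j (j /= k) in all Heyting semilattices;
  since this coproduct is a quotient of the term algebra over (nat \<times> 'a), it suffices
  to let B range over Heyting semilattices with carrier in ((nat \<times> 'a) tm) set.\<close>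
definition in_cosmash :: "'a hslat \<Rightarrow> 'a set list \<Rightarrow> (nat \<times> 'a) tm \<Rightarrow> bool" where
  "in_cosmash A Xs t \<longleftrightarrow> gens t \<subseteq> copr_gens Xs \<and>
     (\<forall>k < length Xs. \<forall>(B :: ((nat \<times> 'a) tm set) hslat) h.
        is_hsl B \<and> (\<forall>j < length Xs. j \<noteq> k \<longrightarrow> hom_on (h j) (Xs ! j) A B) \<longrightarrow>
        eval B (\<lambda>(j, a). if j = k then one B else h j a) t = one B)"

text \<open>Higgins commutator [X_0, ..., X_(n-1)]: image of the cosmash product under
  the map X_0 + ... + X_(n-1) \<rightarrow> A induced by the inclusions.\<close>
definition higgins :: "'a hslat \<Rightarrow> 'a set list \<Rightarrow> 'a set" where
  "higgins A Xs = {eval A (\<lambda>(j, a). a) t | t. in_cosmash A Xs t}"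

text \<open>Congruences of A; normal subobjects (kernels) are exactly the 1-classes of congruences.\<close>
definition congruence :: "'a hslat \<Rightarrow> ('a \<times> 'a) set \<Rightarrow> bool" where
  "congruence A \<theta> \<longleftrightarrow> equiv (carrier A) \<theta> \<and>
     (\<forall>x x' y y'. (x, x') \<in> \<theta> \<longrightarrow> (y, y') \<in> \<theta> \<longrightarrow>
        (meet A x y, meet A x' y') \<in> \<theta> \<and> (imp A x y, imp A x' y') \<in> \<theta>)"

definition normal_closure :: "'a hslat \<Rightarrow> 'a set \<Rightarrow> 'a set" where
  "normal_closure A X = \<Inter>{N. \<exists>\<theta>. congruence A \<theta> \<and> N = {a \<in> carrier A. (a, one A) \<in> \<theta>} \<and> X \<subseteq> N}"

end

theory Submission
  imports Defs
begin

definition leA :: "nat \<Rightarrow> nat \<Rightarrow> bool" where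
  "leA x y \<longleftrightarrow> x = 0 \<or> y = 4 \<or> x = y \<or> (y = 3 \<and> (x = 1 \<or> x = 2))"

definition A5 :: "nat hslat" where
  "A5 = (| carrier = {0,1,2,3,4}, one = 4,
     meet = (\<lambda>x y. if leA x y then x else if leA y x then y else 0),
     imp = (\<lambda>x y. if leA x y then 4 else if x = 1 then 2 else if x = 2 then 1 else y) |)"

lemma A5_hsl: "is_hsl A5"
  unfolding is_hsl_def leq_def A5_def by (simp add: leA_def)

definition B2 :: "((nat \<times> nat) tm set) hslat" where
  "B2 = (| carrier = {UNIV, {}}, one = UNIV, meet = (\<inter>), imp = (\<lambda>p q. - p \<union> q) |)"

lemma B2_hsl: "is_hsl B2"
  unfolding is_hsl_def leq_def B2_def by auto

definition enc :: "(nat \<times> nat) tm set \<Rightarrow> (nat \<times> nat) tm set \<Rightarrow> nat" where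
  "enc P Q = (if P = UNIV then (if Q = UNIV then 4 else 2) else (if Q = UNIV then 1 else 0))"

lemma enc_meet:
  assumes "P = UNIV \<or> P = {}" "Q = UNIV \<or> Q = {}" "P' = UNIV \<or> P' = {}" "Q' = UNIV \<or> Q' = {}"
  shows "enc (P \<inter> P') (Q \<inter> Q') = meet A5 (enc P Q) (enc P' Q')"
  using assms by (elim disjE; simp add: enc_def A5_def leA_def)

lemma enc_imp:
  assumes "P = UNIV \<or> P = {}" "Q = UNIV \<or> Q = {}" "P' = UNIV \<or> P' = {}" "Q' = UNIV \<or> Q' = {}"
  shows "enc (- P \<union> P') (- Q \<union> Q') = imp A5 (enc P Q) (enc P' Q')"
  using assms by (elim disjE; simp add: enc_def A5_def leA_def)


context
  fixes B :: "'a hslat"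
  assumes H: "is_hsl B"
begin

lemma ax_one: "one B \<in> carrier B" using H unfolding is_hsl_def by simp
lemma ax_meet: "x \<in> carrier B \<Longrightarrow> y \<in> carrier B \<Longrightarrow> meet B x y \<in> carrier B"
  using H unfolding is_hsl_def by simp
lemma ax_imp: "x \<in> carrier B \<Longrightarrow> y \<in> carrier B \<Longrightarrow> imp B x y \<in> carrier B"
  using H unfolding is_hsl_def by simp
lemma ax_idem: "x \<in> carrier B \<Longrightarrow> meet B x x = x"
  using H unfolding is_hsl_def by simp
lemma ax_comm: "x \<in> carrier B \<Longrightarrow> y \<in> carrier B \<Longrightarrow> meet B x y = meet B y x"
  using H unfolding is_hsl_def by blast
lemma ax_assoc: "x \<in> carrier B \<Longrightarrow> y \<in> carrier B \<Longrightarrow> z \<in> carrier B \<Longrightarrow>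
   meet B (meet B x y) z = meet B x (meet B y z)"
  using H unfolding is_hsl_def by blast
lemma ax_top: "x \<in> carrier B \<Longrightarrow> meet B x (one B) = x"
  using H unfolding is_hsl_def by simp
lemma ax_gal: "x \<in> carrier B \<Longrightarrow> y \<in> carrier B \<Longrightarrow> z \<in> carrier B \<Longrightarrow>
   leq B (meet B x y) z \<longleftrightarrow> leq B x (imp B y z)"
  using H unfolding is_hsl_def by blast

lemma leq_one_eq:
  assumes "w \<in> carrier B" "leq B (one B) w" shows "w = one B"
proof -
  have "meet B (one B) w = one B" using assms(2) unfolding leq_def .
  moreover have "meet B (one B) w = w" using ax_comm[OF ax_one assms(1)] ax_top[OF assms(1)] by simp
  ultimately show ?thesis by simp
qed

lemma imp_one_if_leq:
  assumes x: "x \<in> carrier B" and y: "y \<in> carrier B" and l: "leq B x y"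
  shows "imp B x y = one B"
proof -
  have m: "meet B (one B) x = x" using ax_comm[OF ax_one x] ax_top[OF x] by simp
  have "leq B (meet B (one B) x) y" using m l by simp
  then have "leq B (one B) (imp B x y)" using ax_gal[OF ax_one x y] by simp
  then show ?thesis using leq_one_eq ax_imp[OF x y] by blast
qed

lemma leq_refl: "x \<in> carrier B \<Longrightarrow> leq B x x"
  unfolding leq_def by (rule ax_idem)

lemma imp_x_one: "x \<in> carrier B \<Longrightarrow> imp B x (one B) = one B"
  by (rule imp_one_if_leq) (auto simp: leq_def ax_top ax_one)

lemma imp_self: "x \<in> carrier B \<Longrightarrow> imp B x x = one B"
  by (rule imp_one_if_leq) (auto simp: leq_refl)

lemma one_imp:
  assumes z: "z \<in> carrier B" shows "imp B (one B) z = z"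
proof -
  define u where "u = imp B (one B) z"
  have u: "u \<in> carrier B" unfolding u_def by (rule ax_imp[OF ax_one z])
  have "leq B u u" using leq_refl u by blast
  then have "leq B (meet B u (one B)) z" using ax_gal[OF u ax_one z] u_def by simp
  then have 1: "meet B u z = u" using ax_top[OF u] unfolding leq_def by simp
  have "leq B (meet B z (one B)) z" using ax_top[OF z] leq_refl[OF z] by simp
  then have "leq B z u" using ax_gal[OF z ax_one z] u_def by simp
  then have 2: "meet B z u = z" unfolding leq_def .
  show ?thesis using 1 2 ax_comm[OF u z] u_def by simp
qed

lemma leq_imp:
  assumes y: "y \<in> carrier B" and z: "z \<in> carrier B"
  shows "leq B z (imp B y z)"
proof -
  have "meet B (meet B z y) z = meet B z (meet B y z)" by (rule ax_assoc[OF z y z])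
  also have "\<dots> = meet B z (meet B z y)" using ax_comm[OF y z] by simp
  also have "\<dots> = meet B (meet B z z) y" using ax_assoc[OF z z y] by simp
  also have "\<dots> = meet B z y" using ax_idem[OF z] by simp
  finally have "leq B (meet B z y) z" unfolding leq_def .
  then show ?thesis using ax_gal[OF z y z] by simp
qed

end

definition hB :: "nat \<Rightarrow> nat \<Rightarrow> (nat \<times> nat) tm set" where
  "hB j c = (if c = 4 then UNIV else {})"

abbreviation "e1 t \<equiv> eval B2 (\<lambda>(j, a). if j = 1 then one B2 else hB j a) t"
abbreviation "e0 t \<equiv> eval B2 (\<lambda>(j, a). if j = 0 then one B2 else hB j a) t"

lemma bin_int: "P = UNIV \<or> P = {} \<Longrightarrow> Q = UNIV \<or> Q = {} \<Longrightarrow> P \<inter> Q = UNIV \<or> P \<inter> Q = {}"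
  by (elim disjE) simp_all
lemma bin_imp: "P = UNIV \<or> P = {} \<Longrightarrow> Q = UNIV \<or> Q = {} \<Longrightarrow> - P \<union> Q = UNIV \<or> - P \<union> Q = {}"
  by (elim disjE) simp_all

lemma enc_lemma:
  "gens t \<subseteq> copr_gens [{4,1}, {4,2}] \<Longrightarrow>
    (e1 t = UNIV \<or> e1 t = {}) \<and> (e0 t = UNIV \<or> e0 t = {}) \<and>
    eval A5 (\<lambda>(j, a). a) t = enc (e1 t) (e0 t)"
proof (induction t)
  case (Gen g)
  obtain j c where g: "g = (j, c)" by force
  have "j < 2 \<and> c \<in> [{4,1}, {4,2}] ! j" using Gen g by (simp add: copr_gens_def)
  then have "(j = 0 \<and> (c = 4 \<or> c = 1)) \<or> (j = 1 \<and> (c = 4 \<or> c = 2))"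
    by (auto simp: less_2_cases_iff)
  then show ?case using g
    by (elim disjE conjE; simp add: hB_def enc_def B2_def)
next
  case One
  then show ?case by (simp add: enc_def B2_def A5_def)
next
  case (Meet s t)
  have gs: "gens s \<subseteq> copr_gens [{4,1}, {4,2}]" "gens t \<subseteq> copr_gens [{4,1}, {4,2}]"
    using Meet.prems by auto
  have I: "(e1 s = UNIV \<or> e1 s = {}) \<and> (e0 s = UNIV \<or> e0 s = {}) \<and>
    eval A5 (\<lambda>(j, a). a) s = enc (e1 s) (e0 s)"
   "(e1 t = UNIV \<or> e1 t = {}) \<and> (e0 t = UNIV \<or> e0 t = {}) \<and>
    eval A5 (\<lambda>(j, a). a) t = enc (e1 t) (e0 t)" using Meet.IH gs by blast+
  have m: "\<And>P Q. meet B2 P Q = P \<inter> Q" by (simp add: B2_def)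
  show ?case unfolding eval.simps m using I enc_meet[of "e1 s" "e0 s" "e1 t" "e0 t"]
    by (simp only: eval.simps bin_int bin_imp)
next
  case (Imp s t)
  have gs: "gens s \<subseteq> copr_gens [{4,1}, {4,2}]" "gens t \<subseteq> copr_gens [{4,1}, {4,2}]"
    using Imp.prems by auto
  have I: "(e1 s = UNIV \<or> e1 s = {}) \<and> (e0 s = UNIV \<or> e0 s = {}) \<and>
    eval A5 (\<lambda>(j, a). a) s = enc (e1 s) (e0 s)"
   "(e1 t = UNIV \<or> e1 t = {}) \<and> (e0 t = UNIV \<or> e0 t = {}) \<and>
    eval A5 (\<lambda>(j, a). a) t = enc (e1 t) (e0 t)" using Imp.IH gs by blast+
  have m: "\<And>P Q. imp B2 P Q = - P \<union> Q" by (simp add: B2_def)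
  show ?case unfolding eval.simps m using I enc_imp[of "e1 s" "e0 s" "e1 t" "e0 t"]
    by (simp only: eval.simps bin_int bin_imp)
qed

lemma hom_X: "hom_on (hB 0) {4,1} A5 B2"
  unfolding hom_on_def by (simp add: hB_def A5_def B2_def leA_def)

lemma hom_Y: "hom_on (hB 1) {4,2} A5 B2"
  unfolding hom_on_def by (simp add: hB_def A5_def B2_def leA_def)



lemma cosmash_use:
  fixes A :: "'a hslat" and Xs :: "'a set list"
  assumes c: "in_cosmash A Xs t" and k: "k < length Xs" and B: "is_hsl (B :: ((nat \<times> 'a) tm set) hslat)"
   and hm: "\<forall>j<length Xs. j \<noteq> k \<longrightarrow> hom_on (h j) (Xs ! j) A B"
  shows "eval B (\<lambda>(j, a). if j = k then one B else h j a) t = one B"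
  using c[unfolded in_cosmash_def, THEN conjunct2, rule_format, OF k conjI[OF B hm]] .

lemma cosmash_intro:
  fixes A :: "'a hslat" and Xs :: "'a set list"
  assumes g: "gens t \<subseteq> copr_gens Xs"
    and r: "\<And>k (B :: ((nat \<times> 'a) tm set) hslat) h. k < length Xs \<Longrightarrow> is_hsl B \<Longrightarrow>
   (\<forall>j<length Xs. j \<noteq> k \<longrightarrow> hom_on (h j) (Xs ! j) A B) \<Longrightarrow>
   eval B (\<lambda>(j, a). if j = k then one B else h j a) t = one B"
  shows "in_cosmash (A :: 'a hslat) Xs t"
  unfolding in_cosmash_def
proof (intro conjI allI impI g)
  fix k and B :: "((nat \<times> 'a) tm set) hslat" and h
  assume "k < length Xs"
    and "is_hsl B \<and> (\<forall>j<length Xs. j \<noteq> k \<longrightarrow> hom_on (h j) (Xs ! j) A B)"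
  then show "eval B (\<lambda>(j, a). if j = k then one B else h j a) t = one B"
    using r by (elim conjE)
qed

lemma in_higgins: assumes "in_cosmash A Xs t" shows "eval A (\<lambda>(j, a). a) t \<in> higgins A Xs"
  unfolding higgins_def using assms by auto

lemma one_in_higgins: "one A \<in> higgins A Xs"
proof -
  have c: "in_cosmash A Xs One" unfolding in_cosmash_def by simp
  have "eval A (\<lambda>(j, a). a) One = one A" by simp
  then show ?thesis using in_higgins[OF c] by simp
qed

lemma hom_carrier: "hom_on h X A B \<Longrightarrow> x \<in> X \<Longrightarrow> h x \<in> carrier B"
  unfolding hom_on_def by blast

lemma hom_nth_carrier:
  "\<forall>j<length Xs. j \<noteq> k \<longrightarrow> hom_on (h j) (Xs!j) A B \<Longrightarrow> j < length Xs \<Longrightarrow> j \<noteq> k \<Longrightarrow>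
   x \<in> Xs!j \<Longrightarrow> h j x \<in> carrier B"
  unfolding hom_on_def by blast


lemma comm_XY: "higgins A5 [{4,1}, {4,2}] = {one A5}"
proof -
  have "eval A5 (\<lambda>(j, a). a) t = one A5" if c: "in_cosmash A5 [{4,1}, {4,2}] t" for t
  proof -
    have g: "gens t \<subseteq> copr_gens [{4,1}, {4,2}]" using c unfolding in_cosmash_def by blast
    have "\<forall>j < length [{4,1}, {4,2::nat}]. j \<noteq> 1 \<longrightarrow> hom_on (hB j) ([{4,1}, {4,2}] ! j) A5 B2"
    proof (intro allI impI)
      fix j assume "j < length [{4,1}, {4,2::nat}]" "j \<noteq> 1"
      then have "j = 0" by simp
      then show "hom_on (hB j) ([{4,1}, {4,2}] ! j) A5 B2" using hom_X by simp
    qed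
    then have e1: "e1 t = one B2"
      using cosmash_use[OF c _ B2_hsl, of 1 hB] by simp
    have "\<forall>j < length [{4,1}, {4,2::nat}]. j \<noteq> 0 \<longrightarrow> hom_on (hB j) ([{4,1}, {4,2}] ! j) A5 B2"
    proof (intro allI impI)
      fix j assume "j < length [{4,1}, {4,2::nat}]" "j \<noteq> 0"
      then have "j = 1" by simp
      then show "hom_on (hB j) ([{4,1}, {4,2}] ! j) A5 B2" using hom_Y by simp
    qed
    then have e0: "e0 t = one B2"
      using cosmash_use[OF c _ B2_hsl, of 0 hB] by simp
    have "eval A5 (\<lambda>(j, a). a) t = enc (e1 t) (e0 t)" using enc_lemma[OF g] by blast
    moreover have "one B2 = UNIV" by (simp add: B2_def)
    ultimately show ?thesis using e1 e0 by (simp add: enc_def A5_def)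
  qed
  then have "higgins A5 [{4,1}, {4,2}] \<subseteq> {one A5}" unfolding higgins_def by blast
  then show ?thesis using one_in_higgins[of A5 "[{4,1}, {4,2}]"] by blast
qed

definition t3 :: "(nat \<times> nat) tm" where
  "t3 = Imp (Imp (Gen (0,1)) (Gen (2,3))) (Imp (Imp (Gen (1,2)) (Gen (2,3))) (Gen (2,3)))"

lemma t3_cosmash: "in_cosmash A5 [{4,1}, {4,2}, {4,3}] t3"
proof (rule cosmash_intro)
  show "gens t3 \<subseteq> copr_gens [{4,1}, {4,2}, {4,3}]"
    by (simp add: t3_def copr_gens_def)
next
  fix k and B :: "((nat \<times> nat) tm set) hslat" and h
  assume k: "k < length [{4,1}, {4,2}, {4,3::nat}]" and H: "is_hsl B"
    and hm: "\<forall>j<length [{4,1}, {4,2}, {4,3::nat}]. j \<noteq> k \<longrightarrow> hom_on (h j) ([{4,1}, {4,2}, {4,3}] ! j) A5 B"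
  have o: "one B \<in> carrier B" by (rule ax_one[OF H])
  have k3: "k = 0 \<or> k = 1 \<or> k = 2" using k by auto
  then show "eval B (\<lambda>(j, a). if j = k then one B else h j a) t3 = one B"
  proof (elim disjE)
    assume k0: "k = 0"
    have y: "h 1 2 \<in> carrier B" by (rule hom_nth_carrier[OF hm, of 1 2]) (use k0  in simp_all)
    have z: "h 2 3 \<in> carrier B" by (rule hom_nth_carrier[OF hm, of 2 3]) (use k0  in simp_all)
    have yz: "imp B (h 1 2) (h 2 3) \<in> carrier B" by (rule ax_imp[OF H y z])
    have "imp B (h 2 3) (imp B (imp B (h 1 2) (h 2 3)) (h 2 3)) = one B"
      by (rule imp_one_if_leq[OF H z ax_imp[OF H yz z] leq_imp[OF H yz z]])
    then show ?thesis using k0 one_imp[OF H z] by (simp add: t3_def)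
  next
    assume k1: "k = 1"
    have x: "h 0 1 \<in> carrier B" by (rule hom_nth_carrier[OF hm, of 0 1]) (use k1  in simp_all)
    have z: "h 2 3 \<in> carrier B" by (rule hom_nth_carrier[OF hm, of 2 3]) (use k1  in simp_all)
    show ?thesis using k1 one_imp[OF H z] imp_self[OF H z] imp_x_one[OF H ax_imp[OF H x z]]
      by (simp add: t3_def)
  next
    assume k2: "k = 2"
    have x: "h 0 1 \<in> carrier B" by (rule hom_nth_carrier[OF hm, of 0 1]) (use k2  in simp_all)
    have y: "h 1 2 \<in> carrier B" by (rule hom_nth_carrier[OF hm, of 1 2]) (use k2  in simp_all)
    show ?thesis using k2 imp_x_one[OF H x] imp_x_one[OF H y] imp_x_one[OF H o]
      by (simp add: t3_def)
  qed
qed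

lemma part1: "higgins A5 [{4,1}, {4,2}, {4,3}] \<noteq> {one A5}"
proof -
  have "eval A5 (\<lambda>(j, a). a) t3 \<in> higgins A5 [{4,1}, {4,2}, {4,3}]"
    by (rule in_higgins[OF t3_cosmash])
  moreover have "eval A5 (\<lambda>(j, a). a) t3 = 3" by (simp add: t3_def A5_def leA_def)
  ultimately have h3: "(3::nat) \<in> higgins A5 [{4,1}, {4,2}, {4,3}]" by metis
  show ?thesis
  proof
    assume "higgins A5 [{4,1}, {4,2}, {4,3}] = {one A5}"
    with h3 have "3 = one A5" by blast
    then show False by (simp add: A5_def)
  qed
qed

lemma nc3:
  assumes "c \<in> {1, 2::nat}"
  shows "3 \<in> normal_closure A5 {4, c}"
  unfolding normal_closure_def
proof (rule InterI, clarify)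
  fix \<theta> assume cg: "congruence A5 \<theta>" and sub: "{4, c} \<subseteq> {a \<in> carrier A5. (a, one A5) \<in> \<theta>}"
  have c4: "(c, 4) \<in> \<theta>" using sub by (simp add: A5_def)
  have eq: "equiv {0,1,2,3,4} \<theta>" using cg unfolding congruence_def by (simp add: A5_def)
  have "(3, 3) \<in> \<theta>" using eq unfolding equiv_def refl_on_def by blast
  then have "(imp A5 c 3, imp A5 4 3) \<in> \<theta>" using cg c4 unfolding congruence_def by blast
  then have "(4, 3) \<in> \<theta>" using assms by (auto simp: A5_def leA_def)
  then have "(3, 4) \<in> \<theta>" using eq unfolding equiv_def sym_def by blast
  then show "3 \<in> carrier A5 \<and> (3, one A5) \<in> \<theta>" by (simp add: A5_def)
qed

definition t2 :: "(nat \<times> nat) tm" where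
  "t2 = Imp (Imp (Gen (0,3)) (Gen (1,3))) (Gen (1,3))"

lemma t2_cosmash: "in_cosmash A5 [normal_closure A5 {4,1}, normal_closure A5 {4,2}] t2"
proof (rule cosmash_intro)
  show "gens t2 \<subseteq> copr_gens [normal_closure A5 {4,1}, normal_closure A5 {4,2}]"
    using nc3[of 1] nc3[of 2] by (simp add: t2_def copr_gens_def)
next
  fix k and B :: "((nat \<times> nat) tm set) hslat" and h
  assume k: "k < length [normal_closure A5 {4,1}, normal_closure A5 {4,2}]" and H: "is_hsl B"
    and hm: "\<forall>j<length [normal_closure A5 {4,1}, normal_closure A5 {4,2}]. j \<noteq> k \<longrightarrow>
       hom_on (h j) ([normal_closure A5 {4,1}, normal_closure A5 {4,2}] ! j) A5 B"
  have o: "one B \<in> carrier B" by (rule ax_one[OF H])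
  have k3: "k = 0 \<or> k = 1" using k by auto
  then show "eval B (\<lambda>(j, a). if j = k then one B else h j a) t2 = one B"
  proof (elim disjE)
    assume k0: "k = 0"
    have v: "h 1 3 \<in> carrier B"
      by (rule hom_nth_carrier[OF hm, of 1 3]) (use k0 nc3[of 2] in simp_all)
    show ?thesis using k0 one_imp[OF H v] imp_self[OF H v] by (simp add: t2_def)
  next
    assume k1: "k = 1"
    have u: "h 0 3 \<in> carrier B"
      by (rule hom_nth_carrier[OF hm, of 0 3]) (use k1 nc3[of 1] in simp_all)
    show ?thesis using k1 imp_x_one[OF H u] imp_x_one[OF H o] by (simp add: t2_def)
  qed
qed

lemma part2: "higgins A5 [normal_closure A5 {4,1}, normal_closure A5 {4,2}] \<noteq> {one A5}"
proof -
  have "eval A5 (\<lambda>(j, a). a) t2 \<in> higgins A5 [normal_closure A5 {4,1}, normal_closure A5 {4,2}]"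
    by (rule in_higgins[OF t2_cosmash])
  moreover have "eval A5 (\<lambda>(j, a). a) t2 = 3" by (simp add: t2_def A5_def leA_def)
  ultimately have h3: "(3::nat) \<in> higgins A5 [normal_closure A5 {4,1}, normal_closure A5 {4,2}]" by metis
  show ?thesis
  proof
    assume "higgins A5 [normal_closure A5 {4,1}, normal_closure A5 {4,2}] = {one A5}"
    with h3 have "3 = one A5" by blast
    then show False by (simp add: A5_def)
  qed
qed

lemma subalgs: "subalg A5 {4,1}" "subalg A5 {4,2}" "subalg A5 {4,3}"
  unfolding subalg_def by (simp_all add: A5_def leA_def)

theorem mainTheorem2:
  shows "(\<exists>(A :: nat hslat) X Y Z. is_hsl A \<and> subalg A X \<and> subalg A Y \<and> subalg A Z \<and>
            higgins A [X, Y] = {one A} \<and> higgins A [X, Y, Z] \<noteq> {one A})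
       \<and> (\<exists>(A :: nat hslat) X Y. is_hsl A \<and> subalg A X \<and> subalg A Y \<and>
            higgins A [X, Y] = {one A} \<and>
            higgins A [normal_closure A X, normal_closure A Y] \<noteq> {one A})"
proof (rule conjI)
  show "\<exists>(A :: nat hslat) X Y Z. is_hsl A \<and> subalg A X \<and> subalg A Y \<and> subalg A Z \<and>
            higgins A [X, Y] = {one A} \<and> higgins A [X, Y, Z] \<noteq> {one A}"
    by (rule exI[of _ A5], rule exI[of _ "{4,1}"], rule exI[of _ "{4,2}"], rule exI[of _ "{4,3}"])
      (intro conjI A5_hsl subalgs comm_XY part1)
  show "\<exists>(A :: nat hslat) X Y. is_hsl A \<and> subalg A X \<and> subalg A Y \<and>
            higgins A [X, Y] = {one A} \<and>
            higgins A [normal_closure A X, normal_closure A Y] \<noteq> {one A}"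
    by (rule exI[of _ A5], rule exI[of _ "{4,1}"], rule exI[of _ "{4,2}"])
      (intro conjI A5_hsl subalgs comm_XY part2)
qed

end
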